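(* For every route $R$ and every $b\in\mathbb{Z}^{V_+}_{\ge0}$, $$\operatorname{conv}\big(\Pi(R)\cap[\mathbf 0,b]^N\big)=\operatorname{conv}(\Pi(R))\cap[\mathbf 0,b]^N.$$
   Context: $G=(V,E)$ complete undirected graph with $V=\{0\}\cup V_+$ ($0$ depot, $V_+$ customers); $D=(V,A)$ replaces each edge by two opposite arcs. Capacity $C\in\mathbb{Q}_{>0}$; scenarios $\xi\in[N]$ with demand vectors $d^\xi\in\mathbb{Q}^{V_+}_{\ge0}$, $d^\xi(v)\le C$ for all $\xi,v$. A route $R=(v_1,\dots,v_\ell)$ is the cycle $0,v_1,\dots,v_\ell,0$ through distinct customers, $v_0=v_{\ell+1}=0$. Vectors $y\in\mathbb{R}^{[N]\times V_+}$ have entries $y^\xi_v$. For a route $R$ and $\xi$, $\mathcal{Y}^\xi(R)$ is the set of $y^\xi\in\mathbb{Z}^{V_+}_{\ge0}$ for which there exist $f\in\mathbb{R}^A_{\ge0}$, $g\in\mathbb{R}^{V_+}_{\ge0}$ with $f_{(v_{i-1},v_i)}+d^\xi(v_i)=f_{(v_i,v_{i+1})}+g_{v_i}$ ($i\in[\ell]$), $f_{(v_{i-1},v_i)}\le C$ ($i\in[\ell+1]$), $g_{v_i}\le Cy^\xi_{v_i}$ ($i\in[\ell]$). $\Pi(R)=\mathcal{Y}^1(R)\times\cdots\times\mathcal{Y}^N(R)$. $[\mathbf 0,b]^N=\{y:0\le y^\xi_v\le b_v\ \forall\xi,v\}$. *)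

theory Defs
  imports "HOL-Analysis.Analysis"
begin

text \<open>Customers V+ are the elements of a finite type 'v; the depot 0 is None,
  so V = 'v option. Scenarios [N] are the elements of a finite type 's.\<close>

definition arcs :: "('v option \<times> 'v option) set" where
  "arcs = {(u, w). u \<noteq> w}"

definition is_route :: "'v list \<Rightarrow> bool" where
  "is_route R \<longleftrightarrow> R \<noteq> [] \<and> distinct R"

definition rv :: "'v list \<Rightarrow> nat \<Rightarrow> 'v option" where
  "rv R i = (if 1 \<le> i \<and> i \<le> length R then Some (R ! (i - 1)) else None)"

definition Yset :: "real \<Rightarrow> ('v \<Rightarrow> real) \<Rightarrow> 'v list \<Rightarrow> ('v \<Rightarrow> real) set" where
  "Yset C dxi R = {y. (\<forall>v. y v \<in> \<int> \<and> 0 \<le> y v) \<and>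
     (\<exists>f :: 'v option \<times> 'v option \<Rightarrow> real. \<exists>g :: 'v \<Rightarrow> real.
        (\<forall>a\<in>arcs. 0 \<le> f a) \<and> (\<forall>v. 0 \<le> g v) \<and>
        (\<forall>i\<in>{1..length R}.
           f (rv R (i - 1), rv R i) + dxi (R ! (i - 1)) = f (rv R i, rv R (i + 1)) + g (R ! (i - 1))) \<and>
        (\<forall>i\<in>{1..length R + 1}. f (rv R (i - 1), rv R i) \<le> C) \<and>
        (\<forall>i\<in>{1..length R}. g (R ! (i - 1)) \<le> C * y (R ! (i - 1))))}"

definition PiR :: "real \<Rightarrow> ('s::finite \<Rightarrow> 'v::finite \<Rightarrow> real) \<Rightarrow> 'v list \<Rightarrow> (real ^ ('s \<times> 'v)) set" where
  "PiR C d R = {y. \<forall>xi. (\<lambda>v. y $ (xi, v)) \<in> Yset C (d xi) R}"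

definition boxN :: "('v::finite \<Rightarrow> int) \<Rightarrow> (real ^ ('s::finite \<times> 'v)) set" where
  "boxN b = {y. \<forall>xi v. 0 \<le> y $ (xi, v) \<and> y $ (xi, v) \<le> of_int (b v)}"

end

theory Submission
  imports Defs
begin


definition oval :: "real^'n \<Rightarrow> 'n option \<Rightarrow> real" where
  "oval p a = (case a of None \<Rightarrow> 0 | Some u \<Rightarrow> p$u)"

definition satK :: "('n option \<times> 'n option \<times> int) set \<Rightarrow> real^'n \<Rightarrow> bool" where
  "satK K p \<longleftrightarrow> (\<forall>(a,b,c)\<in>K. of_int c \<le> oval p a - oval p b)"

definition fracs :: "real^'n \<Rightarrow> real set" where
  "fracs p = (\<lambda>i. frac (p$i)) ` UNIV - {0}"

lemma floor_diff_ge: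
  fixes x z :: real
  assumes "of_int c \<le> x - z"
  shows "c \<le> \<lfloor>x\<rfloor> - \<lfloor>z\<rfloor>"
proof -
  have "x - z < of_int (\<lfloor>x\<rfloor> - \<lfloor>z\<rfloor>) + 1"
  proof -
    have "x < of_int \<lfloor>x\<rfloor> + 1" "of_int \<lfloor>z\<rfloor> \<le> z" by linarith+
    thus ?thesis by linarith
  qed
  hence "(of_int c :: real) < of_int (\<lfloor>x\<rfloor> - \<lfloor>z\<rfloor> + 1)" using assms by simp
  hence "c < \<lfloor>x\<rfloor> - \<lfloor>z\<rfloor> + 1" by linarith
  thus ?thesis by simp
qed

lemma floor_diff_ge':
  fixes x z :: real
  assumes "of_int c \<le> x - z"
  shows "(of_int c :: real) \<le> of_int \<lfloor>x\<rfloor> - of_int \<lfloor>z\<rfloor>"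
proof -
  have "c \<le> \<lfloor>x\<rfloor> - \<lfloor>z\<rfloor>" by (rule floor_diff_ge[OF assms])
  hence "(of_int c :: real) \<le> of_int (\<lfloor>x\<rfloor> - \<lfloor>z\<rfloor>)" by (simp only: of_int_le_iff)
  thus ?thesis by simp
qed

lemma scaled_diff_ge:
  fixes x z f :: real
  assumes "of_int c \<le> x - z" "frac x \<le> f" "frac z \<le> f" "0 < f"
  shows "of_int c \<le> (of_int \<lfloor>x\<rfloor> + frac x / f) - (of_int \<lfloor>z\<rfloor> + frac z / f)"
proof -
  have m: "c \<le> \<lfloor>x\<rfloor> - \<lfloor>z\<rfloor>" using floor_diff_ge[OF assms(1)] .
  have fx: "0 \<le> frac x / f" "frac x / f \<le> 1" using assms by (auto simp: divide_simps)
  have fz: "0 \<le> frac z / f" "frac z / f \<le> 1" using assms by (auto simp: divide_simps)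
  show ?thesis
  proof (cases "c = \<lfloor>x\<rfloor> - \<lfloor>z\<rfloor>")
    case True
    have "x = of_int \<lfloor>x\<rfloor> + frac x" "z = of_int \<lfloor>z\<rfloor> + frac z" by (simp_all add: frac_def)
    with assms(1) True have "frac z \<le> frac x" by (smt (verit) of_int_diff)
    hence "frac z / f \<le> frac x / f" using assms(4) by (simp add: divide_right_mono)
    with True show ?thesis by simp
  next
    case False
    hence "c + 1 \<le> \<lfloor>x\<rfloor> - \<lfloor>z\<rfloor>" using m by simp
    hence "of_int c + 1 \<le> of_int \<lfloor>x\<rfloor> - (of_int \<lfloor>z\<rfloor> :: real)"
      by (metis of_int_add of_int_diff of_int_le_iff of_int_1)
    with fx fz show ?thesis by linarith
  qed
qed

lemma rounding_aux:
  fixes p :: "real^'n"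
  shows "card (fracs p) = n \<Longrightarrow> satK K p \<Longrightarrow> p \<in> convex hull {q. satK K q \<and> (\<forall>i. q$i \<in> \<int>)}"
proof (induction n arbitrary: p rule: less_induct)
  case (less n p)
  let ?S = "{q. satK K q \<and> (\<forall>i. q$i \<in> \<int>)}"
  have fin: "finite (fracs p)" unfolding fracs_def by simp
  show ?case
  proof (cases "fracs p = {}")
    case True
    hence "\<forall>i. p$i \<in> \<int>" unfolding fracs_def using frac_eq_0_iff by blast
    thus ?thesis using less.prems by (intro hull_inc) auto
  next
    case False
    define f where "f = Max (fracs p)"
    have fin': "f \<in> fracs p" unfolding f_def using False fin by simp
    hence f0: "0 < f" and f1: "f < 1" unfolding fracs_def
      using frac_lt_1 frac_ge_0 by (auto simp: order_le_less)
    have fle: "frac (p$i) \<le> f" for i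
    proof (cases "frac (p$i) = 0")
      case True thus ?thesis using f0 by linarith
    next
      case False
      hence "frac (p$i) \<in> fracs p" unfolding fracs_def by auto
      thus ?thesis unfolding f_def using fin by simp
    qed
    define p0 :: "real^'n" where "p0 = (\<chi> i. of_int \<lfloor>p$i\<rfloor>)"
    define p1 :: "real^'n" where "p1 = (\<chi> i. of_int \<lfloor>p$i\<rfloor> + frac (p$i) / f)"
    have decomp: "p = (1 - f) *\<^sub>R p0 + f *\<^sub>R p1"
      unfolding p0_def p1_def using f0
      by (simp add: vec_eq_iff frac_def field_simps)
    have ov0: "oval p0 a = of_int \<lfloor>oval p a\<rfloor>" for a
      unfolding p0_def oval_def by (cases a) auto
    have ov1: "oval p1 a = of_int \<lfloor>oval p a\<rfloor> + frac (oval p a) / f" for a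
      unfolding p1_def oval_def by (cases a) auto
    have fle': "frac (oval p a) \<le> f" for a
      using fle f0 unfolding oval_def by (cases a) auto
    have s0: "p0 \<in> ?S"
    proof -
      have "satK K p0" using less.prems(2) unfolding satK_def
        by (auto simp: ov0 intro!: floor_diff_ge')
      moreover have "\<forall>i. p0$i \<in> \<int>" unfolding p0_def by simp
      ultimately show ?thesis by simp
    qed
    have sat1: "satK K p1" using less.prems(2) unfolding satK_def
      by (auto simp: ov1 intro!: scaled_diff_ge fle' f0)
    have sub: "fracs p1 \<subseteq> (\<lambda>t. t / f) ` (fracs p - {f})"
    proof
      fix t assume "t \<in> fracs p1"
      then obtain i where ti: "t = frac (p1$i)" and t0: "t \<noteq> 0" unfolding fracs_def by auto
      have pi: "p1$i = of_int \<lfloor>p$i\<rfloor> + frac (p$i) / f" unfolding p1_def by simp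
      have ne: "frac (p$i) \<noteq> f"
      proof
        assume "frac (p$i) = f"
        hence "p1$i = of_int (\<lfloor>p$i\<rfloor> + 1)" using pi f0 by simp
        hence "t = 0" using ti by simp
        with t0 show False by simp
      qed
      hence lt: "frac (p$i) < f" using fle[of i] by simp
      have "frac (p1$i) = frac (p$i) / f"
        unfolding frac_unique_iff using pi lt f0 by (simp add: divide_simps)
      hence "t = frac (p$i) / f" using ti by simp
      moreover have "frac (p$i) \<in> fracs p - {f}" using ne t0 \<open>t = frac (p$i) / f\<close>
        unfolding fracs_def by auto
      ultimately show "t \<in> (\<lambda>t. t / f) ` (fracs p - {f})" by blast
    qed
    have "card (fracs p1) \<le> card ((\<lambda>t. t / f) ` (fracs p - {f}))"
      using sub fin by (intro card_mono) auto
    also have "\<dots> \<le> card (fracs p - {f})" by (rule card_image_le) (use fin in simp)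
    also have "\<dots> < card (fracs p)" using fin fin' by (rule card_Diff1_less)
    finally have "card (fracs p1) < n" using less.prems(1) by simp
    hence s1: "p1 \<in> convex hull ?S" using less.IH sat1 by blast
    have "(1 - f) *\<^sub>R p0 + f *\<^sub>R p1 \<in> convex hull ?S"
      using convex_convex_hull[of ?S] s1 hull_inc[OF s0] f0 f1
      unfolding convex_def by auto
    thus ?thesis using decomp by simp
  qed
qed

lemma rounding:
  fixes p :: "real^'n"
  shows "satK K p \<Longrightarrow> p \<in> convex hull {q. satK K q \<and> (\<forall>i. q$i \<in> \<int>)}"
  using rounding_aux by blast



definition pos :: "'v list \<Rightarrow> 'v \<Rightarrow> nat" where
  "pos R v = (SOME i. i < length R \<and> R!i = v)"

lemma pos_mem: "v \<in> set R \<Longrightarrow> pos R v < length R \<and> R ! pos R v = v"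
  unfolding pos_def by (rule someI_ex) (simp add: in_set_conv_nth)

lemma pos_nth: "distinct R \<Longrightarrow> i < length R \<Longrightarrow> pos R (R!i) = i"
  using pos_mem[of "R!i" R] by (metis nth_eq_iff_index_eq nth_mem)

lemma rv_in: "1 \<le> i \<Longrightarrow> i \<le> length R \<Longrightarrow> rv R i = Some (R!(i-1))"
  unfolding rv_def by simp

lemma rv_0: "rv R 0 = None" unfolding rv_def by simp
lemma rv_out: "length R < i \<Longrightarrow> rv R i = None" unfolding rv_def by simp

lemma Y_char:
  fixes C :: real and dxi y :: "'v \<Rightarrow> real"
  assumes C: "C > 0" and d0: "\<And>v. 0 \<le> dxi v" and dist: "distinct R"
  shows "y \<in> Yset C dxi R \<longleftrightarrow> (\<forall>v. y v \<in> \<int> \<and> 0 \<le> y v) \<and>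
     (\<forall>j k. j < k \<longrightarrow> k \<le> length R \<longrightarrow>
        (\<Sum>i\<in>{j..<k}. dxi (R!i)) - C \<le> C * (\<Sum>i\<in>{j..<k}. y (R!i)))"
    (is "_ \<longleftrightarrow> ?I \<and> ?K")
proof
  assume "y \<in> Yset C dxi R"
  then obtain f :: "'v option \<times> 'v option \<Rightarrow> real" and g where
    yi: "\<forall>v. y v \<in> \<int> \<and> 0 \<le> y v" and
    f0: "\<forall>a\<in>arcs. 0 \<le> f a" and g0: "\<forall>v. 0 \<le> g v" and
    fl: "\<forall>i\<in>{1..length R}.
           f (rv R (i - 1), rv R i) + dxi (R ! (i - 1)) = f (rv R i, rv R (i + 1)) + g (R ! (i - 1))" and
    fC: "\<forall>i\<in>{1..length R + 1}. f (rv R (i - 1), rv R i) \<le> C" and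
    gC: "\<forall>i\<in>{1..length R}. g (R ! (i - 1)) \<le> C * y (R ! (i - 1))"
    unfolding Yset_def by blast
  define F where "F m = f (rv R m, rv R (Suc m))" for m
  have flow: "F m + dxi (R!m) = F (Suc m) + g (R!m)" if "m < length R" for m
    using fl[rule_format, of "Suc m"] that unfolding F_def by simp
  have Fle: "F m \<le> C" if "m \<le> length R" for m
    using fC[rule_format, of "Suc m"] that unfolding F_def by simp
  have Fge: "0 \<le> F m" if "m < length R" for m
  proof -
    have "rv R (Suc m) = Some (R!m)" using that by (simp add: rv_in)
    moreover have "rv R m \<noteq> Some (R!m)"
    proof (cases m)
      case 0 thus ?thesis by (simp add: rv_0)
    next
      case (Suc m')
      hence "rv R m = Some (R!m')" using that by (simp add: rv_in)
      thus ?thesis using dist that Suc by (simp add: nth_eq_iff_index_eq)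
    qed
    ultimately have "(rv R m, rv R (Suc m)) \<in> arcs" unfolding arcs_def by auto
    thus ?thesis using f0 unfolding F_def by auto
  qed
  have gle: "g (R!i) \<le> C * y (R!i)" if "i < length R" for i
    using gC[rule_format, of "Suc i"] that by simp
  have tele: "F j + (\<Sum>i\<in>{j..<k}. dxi (R!i)) = F k + (\<Sum>i\<in>{j..<k}. g (R!i))"
    if "j \<le> k" "k \<le> length R" for j k
    using that
  proof (induction k rule: dec_induct)
    case base thus ?case by simp
  next
    case (step k)
    have "F j + (\<Sum>i\<in>{j..<Suc k}. dxi (R!i)) = F j + (\<Sum>i\<in>{j..<k}. dxi (R!i)) + dxi (R!k)"
      using step by simp
    also have "\<dots> = F k + dxi (R!k) + (\<Sum>i\<in>{j..<k}. g (R!i))" using step by simp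
    also have "\<dots> = F (Suc k) + g (R!k) + (\<Sum>i\<in>{j..<k}. g (R!i))" using flow[of k] step by simp
    also have "\<dots> = F (Suc k) + (\<Sum>i\<in>{j..<Suc k}. g (R!i))" using step by simp
    finally show ?case .
  qed
  have "?K"
  proof (intro allI impI)
    fix j k :: nat assume jk: "j < k" "k \<le> length R"
    have "(\<Sum>i\<in>{j..<k}. g (R!i)) \<le> (\<Sum>i\<in>{j..<k}. C * y (R!i))"
      using jk by (intro sum_mono gle) auto
    also have "\<dots> = C * (\<Sum>i\<in>{j..<k}. y (R!i))" by (simp add: sum_distrib_left)
    finally have "(\<Sum>i\<in>{j..<k}. g (R!i)) \<le> C * (\<Sum>i\<in>{j..<k}. y (R!i))" .
    moreover have "F k \<le> C" using Fle jk by simp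
    moreover have "0 \<le> F j" using Fge jk by simp
    moreover note tele[of j k] jk
    ultimately show "(\<Sum>i\<in>{j..<k}. dxi (R!i)) - C \<le> C * (\<Sum>i\<in>{j..<k}. y (R!i))" by simp
  qed
  with yi show "?I \<and> ?K" by simp
next
  assume H: "?I \<and> ?K"
  hence yi: "\<And>v. y v \<in> \<int>" "\<And>v. 0 \<le> y v" and K: ?K by auto
  define F where "F = rec_nat 0 (\<lambda>m x. max 0 (x + dxi (R!m) - C * y (R!m)))"
  have F0: "F 0 = 0" and FS: "F (Suc m) = max 0 (F m + dxi (R!m) - C * y (R!m))" for m
    unfolding F_def by simp_all
  have Fge: "0 \<le> F m" for m by (cases m) (simp_all add: F0 FS)
  have Fpos: "0 < F m \<Longrightarrow> \<exists>j<m. F m = (\<Sum>i\<in>{j..<m}. dxi (R!i) - C * y (R!i))" for m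
  proof (induction m)
    case 0 thus ?case by (simp add: F0)
  next
    case (Suc m)
    hence eq: "F (Suc m) = F m + dxi (R!m) - C * y (R!m)" by (simp add: FS split: if_splits)
    show ?case
    proof (cases "F m = 0")
      case True thus ?thesis using eq by (intro exI[of _ m]) simp
    next
      case False
      with Fge[of m] obtain j where "j < m" "F m = (\<Sum>i\<in>{j..<m}. dxi (R!i) - C * y (R!i))"
        using Suc.IH by force
      thus ?thesis using eq by (intro exI[of _ j]) simp
    qed
  qed
  have FC: "F m \<le> C" if "m \<le> length R" for m
  proof (cases "0 < F m")
    case True
    then obtain j where j: "j < m" "F m = (\<Sum>i\<in>{j..<m}. dxi (R!i) - C * y (R!i))" using Fpos by blast
    hence "F m = (\<Sum>i\<in>{j..<m}. dxi (R!i)) - C * (\<Sum>i\<in>{j..<m}. y (R!i))"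
      by (simp add: sum_subtractf sum_distrib_left)
    thus ?thesis using K j that by force
  next
    case False thus ?thesis using C by simp
  qed
  define f :: "'v option \<times> 'v option \<Rightarrow> real" where
    "f a = (case snd a of None \<Rightarrow> F (length R) | Some v \<Rightarrow> F (pos R v))" for a
  define g where "g v = (if v \<in> set R then min (F (pos R v) + dxi v) (C * y v) else 0)" for v
  have fv: "f (rv R (i - 1), rv R i) = F (i - 1)" if "1 \<le> i" "i \<le> length R + 1" for i
  proof (cases "i \<le> length R")
    case True thus ?thesis using that unfolding f_def by (simp add: rv_in pos_nth dist)
  next
    case False
    hence "i = length R + 1" using that by simp
    thus ?thesis unfolding f_def by (simp add: rv_out)
  qed
  have gv: "g (R!m) = min (F m + dxi (R!m)) (C * y (R!m))" if "m < length R" for m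
    using that unfolding g_def by (simp add: pos_nth dist)
  show "y \<in> Yset C dxi R"
    unfolding Yset_def
  proof (intro CollectI conjI exI[of _ f] exI[of _ g])
    show "\<forall>v. y v \<in> \<int> \<and> 0 \<le> y v" using yi by simp
    show "\<forall>a\<in>arcs. 0 \<le> f a" unfolding f_def using Fge by (auto split: option.splits)
    show "\<forall>v. 0 \<le> g v" unfolding g_def using Fge d0 yi(2) C by (auto intro!: mult_nonneg_nonneg)
    show "\<forall>i\<in>{1..length R}. f (rv R (i - 1), rv R i) + dxi (R ! (i - 1)) =
        f (rv R i, rv R (i + 1)) + g (R ! (i - 1))"
    proof
      fix i assume i: "i \<in> {1..length R}"
      have a: "f (rv R (i - 1), rv R i) = F (i - 1)" using fv i by simp
      have b: "f (rv R i, rv R (i + 1)) = F i" using fv[of "i+1"] i by simp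
      have c: "g (R ! (i - 1)) = min (F (i-1) + dxi (R!(i-1))) (C * y (R!(i-1)))" using gv[of "i-1"] i by fastforce
      have d: "F i = max 0 (F (i-1) + dxi (R!(i-1)) - C * y (R!(i-1)))"
        using FS[of "i-1"] i by simp
      show "f (rv R (i - 1), rv R i) + dxi (R ! (i - 1)) = f (rv R i, rv R (i + 1)) + g (R ! (i - 1))"
        unfolding a b c d by linarith
    qed
    show "\<forall>i\<in>{1..length R + 1}. f (rv R (i - 1), rv R i) \<le> C"
      using fv FC by auto
    show "\<forall>i\<in>{1..length R}. g (R ! (i - 1)) \<le> C * y (R ! (i - 1))"
      using gv by auto
  qed
qed



definition node :: "'v list \<Rightarrow> 's \<Rightarrow> nat \<Rightarrow> ('s \<times> 'v) option" where
  "node R xi m = (if m = 0 then None else Some (xi, R!(m-1)))"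

definition Tmap :: "'v list \<Rightarrow> real^('s::finite \<times> 'v::finite) \<Rightarrow> real^('s \<times> 'v)" where
  "Tmap R y = (\<chi> i. if snd i \<in> set R then (\<Sum>k<Suc (pos R (snd i)). y$(fst i, R!k)) else y$i)"

definition Tinv :: "'v list \<Rightarrow> real^('s::finite \<times> 'v::finite) \<Rightarrow> real^('s \<times> 'v)" where
  "Tinv R p = (\<chi> i. if snd i \<in> set R then
      oval p (node R (fst i) (Suc (pos R (snd i)))) - oval p (node R (fst i) (pos R (snd i)))
    else p$i)"

lemma oval_Tmap:
  assumes "distinct R" "m \<le> length R"
  shows "oval (Tmap R y) (node R xi m) = (\<Sum>k<m. y$(xi, R!k))"
proof (cases m)
  case 0 thus ?thesis by (simp add: node_def oval_def)
next
  case (Suc m')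
  hence "m' < length R" using assms by simp
  thus ?thesis using Suc assms by (simp add: node_def oval_def Tmap_def pos_nth)
qed

lemma Tinv_nth:
  assumes "distinct R" "m < length R"
  shows "Tinv R p $ (xi, R!m) = oval p (node R xi (Suc m)) - oval p (node R xi m)"
  using assms by (simp add: Tinv_def pos_nth)

lemma Tinv_sum:
  assumes "distinct R" "j \<le> k" "k \<le> length R"
  shows "(\<Sum>i\<in>{j..<k}. Tinv R p $ (xi, R!i)) = oval p (node R xi k) - oval p (node R xi j)"
proof -
  have "(\<Sum>i\<in>{j..<k}. Tinv R p $ (xi, R!i)) =
        (\<Sum>i\<in>{j..<k}. oval p (node R xi (Suc i)) - oval p (node R xi i))"
    using assms by (intro sum.cong) (auto simp: Tinv_nth)
  also have "\<dots> = oval p (node R xi k) - oval p (node R xi j)"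
    using assms(2) by (rule sum_Suc_diff')
  finally show ?thesis .
qed

lemma Tinv_Tmap:
  fixes y :: "real^('s::finite \<times> 'v::finite)" and R :: "'v list"
  assumes "distinct R"
  shows "Tinv R (Tmap R y) = y"
proof (subst vec_eq_iff, intro allI)
  fix i :: "'s \<times> 'v"
  obtain xi v where i: "i = (xi, v)" by (cases i)
  show "Tinv R (Tmap R y) $ i = y $ i"
  proof (cases "v \<in> set R")
    case True
    then obtain m where m: "m < length R" "v = R!m" by (auto simp: in_set_conv_nth)
    have "Tinv R (Tmap R y) $ (xi, R!m) = (\<Sum>k<Suc m. y$(xi, R!k)) - (\<Sum>k<m. y$(xi, R!k))"
      using m assms by (simp add: Tinv_nth oval_Tmap)
    thus ?thesis using i m by simp
  next
    case False thus ?thesis using i by (simp add: Tinv_def Tmap_def)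
  qed
qed

lemma oval_add: "oval (p + q) a = oval p a + oval q a"
  by (cases a) (simp_all add: oval_def)
lemma oval_scale: "oval (c *\<^sub>R p) a = c * oval p a"
  by (cases a) (simp_all add: oval_def)

lemma linear_Tinv: "linear (Tinv R)"
proof (rule linearI)
  fix p q :: "real^('a \<times> 'b)" and c :: real
  show "Tinv R (p + q) = Tinv R p + Tinv R q"
    by (simp add: vec_eq_iff Tinv_def oval_add)
  show "Tinv R (c *\<^sub>R p) = c *\<^sub>R Tinv R p"
    by (simp add: vec_eq_iff Tinv_def oval_scale algebra_simps)
qed

lemma convex_boxN: "convex (boxN b)"
  unfolding convex_def boxN_def
proof (intro ballI allI impI, simp only: mem_Collect_eq, intro allI conjI)
  fix x y :: "real^('a \<times> 'b)" and u v :: real and xi v'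
  assume x: "\<forall>xi v. 0 \<le> x $ (xi, v) \<and> x $ (xi, v) \<le> of_int (b v)"
    and y: "\<forall>xi v. 0 \<le> y $ (xi, v) \<and> y $ (xi, v) \<le> of_int (b v)"
    and u: "0 \<le> u" and v: "0 \<le> v" and uv: "u + v = 1"
  have x1: "0 \<le> x$(xi,v')" "x$(xi,v') \<le> of_int (b v')" using x by auto
  have y1: "0 \<le> y$(xi,v')" "y$(xi,v') \<le> of_int (b v')" using y by auto
  have "u * x$(xi,v') \<le> u * of_int (b v')" using x1 u by (simp add: mult_left_mono)
  moreover have "v * y$(xi,v') \<le> v * of_int (b v')" using y1 v by (simp add: mult_left_mono)
  moreover have "u * of_int (b v') + v * of_int (b v') = of_int (b v')" using uv
    by (metis distrib_right mult_1)
  ultimately show "(u *\<^sub>R x + v *\<^sub>R y) $ (xi, v') \<le> of_int (b v')" by simp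
  show "0 \<le> (u *\<^sub>R x + v *\<^sub>R y) $ (xi, v')" using x1 y1 u v by simp
qed



lemma lt_split:
  fixes f :: "nat \<Rightarrow> real"
  assumes "j \<le> k"
  shows "(\<Sum>i<k. f i) - (\<Sum>i<j. f i) = (\<Sum>i\<in>{j..<k}. f i)"
  using sum.atLeastLessThan_concat[of 0 j k f] assms by (simp add: atLeast0LessThan)

lemma ceil1:
  fixes C D s :: real
  assumes "C > 0" "of_int \<lceil>(D - C) / C\<rceil> \<le> s"
  shows "D - C \<le> C * s"
proof -
  have "(D - C) / C \<le> s" using assms(2) le_of_int_ceiling order_trans by blast
  thus ?thesis using assms(1) by (simp add: pos_divide_le_eq mult.commute)
qed

lemma ceil2:
  fixes C D s :: real
  assumes "C > 0" "s \<in> \<int>" "D - C \<le> C * s"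
  shows "of_int \<lceil>(D - C) / C\<rceil> \<le> s"
proof -
  obtain n where n: "s = of_int n" using assms(2) Ints_cases by blast
  have "(D - C) / C \<le> s" using assms(1,3) by (simp add: pos_divide_le_eq mult.commute)
  hence "\<lceil>(D - C) / C\<rceil> \<le> n" using n by (simp add: ceiling_le_iff)
  thus ?thesis using n by simp
qed

theorem corollary1:
  fixes C :: real
    and d :: "'s::finite \<Rightarrow> 'v::finite \<Rightarrow> real"
    and R :: "'v list"
    and b :: "'v \<Rightarrow> int"
  assumes "C \<in> \<rat>" and "C > 0"
    and "\<And>xi v. d xi v \<in> \<rat>"
    and "\<And>xi v. 0 \<le> d xi v"
    and "\<And>xi v. d xi v \<le> C"
    and "is_route R"
    and "\<And>v. 0 \<le> b v"
  shows "convex hull (PiR C d R \<inter> boxN b) = (convex hull (PiR C d R)) \<inter> boxN b"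
proof -
  have dist: "distinct R" using assms(6) unfolding is_route_def by simp
  have Cp: "C > 0" by fact
  have Ych: "z \<in> Yset C (d xi) R \<longleftrightarrow> (\<forall>v. z v \<in> \<int> \<and> 0 \<le> z v) \<and>
     (\<forall>j k. j < k \<longrightarrow> k \<le> length R \<longrightarrow>
        (\<Sum>i\<in>{j..<k}. d xi (R!i)) - C \<le> C * (\<Sum>i\<in>{j..<k}. z (R!i)))" for xi z
    by (rule Y_char[OF Cp assms(4) dist])
  define r where "r xi j k = \<lceil>((\<Sum>i\<in>{j..<k}. d xi (R!i)) - C) / C\<rceil>" for xi j k
  define Pint where "Pint = {y :: real^('s\<times>'v). \<forall>xi j k. j < k \<longrightarrow> k \<le> length R \<longrightarrow>
      of_int (r xi j k) \<le> (\<Sum>i\<in>{j..<k}. y$(xi,R!i))}"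
  define K1 :: "(('s\<times>'v) option \<times> ('s\<times>'v) option \<times> int) set" where
    "K1 = {(node R xi k, node R xi j, r xi j k) | xi j k. j < k \<and> k \<le> length R}"
  define K2 :: "(('s\<times>'v) option \<times> ('s\<times>'v) option \<times> int) set" where
    "K2 = {(node R xi (Suc m), node R xi m, 0) | xi m. m < length R}"
  define K3 :: "(('s\<times>'v) option \<times> ('s\<times>'v) option \<times> int) set" where
    "K3 = {(node R xi m, node R xi (Suc m), - b (R!m)) | xi m. m < length R}"
  define K4 :: "(('s\<times>'v) option \<times> ('s\<times>'v) option \<times> int) set" where
    "K4 = {(Some (xi,v), None, 0) | xi v. v \<notin> set R}"
  define K5 :: "(('s\<times>'v) option \<times> ('s\<times>'v) option \<times> int) set" where
    "K5 = {(None, Some (xi,v), - b v) | xi v. v \<notin> set R}"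
  define K where "K = K1 \<union> K2 \<union> K3 \<union> K4 \<union> K5"
  have PiP: "PiR C d R \<subseteq> Pint"
  proof
    fix y assume "y \<in> PiR C d R"
    hence Y: "(\<lambda>v. y$(xi,v)) \<in> Yset C (d xi) R" for xi unfolding PiR_def by simp
    show "y \<in> Pint" unfolding Pint_def
    proof (intro CollectI allI impI)
      fix xi j k assume jk: "j < (k::nat)" "k \<le> length R"
      note Yc = Ych[of "\<lambda>v. y$(xi,v)" xi, THEN iffD1, OF Y[of xi]]
      have "\<forall>v. y$(xi,v) \<in> \<int>" using Yc by simp
      hence "(\<Sum>i\<in>{j..<k}. y$(xi,R!i)) \<in> \<int>" by (intro Ints_sum) auto
      moreover have "(\<Sum>i\<in>{j..<k}. d xi (R!i)) - C \<le> C * (\<Sum>i\<in>{j..<k}. y$(xi,R!i))"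
        using Yc jk by simp
      ultimately show "of_int (r xi j k) \<le> (\<Sum>i\<in>{j..<k}. y$(xi,R!i))"
        unfolding r_def by (rule ceil2[OF Cp])
    qed
  qed
  have cP: "convex Pint"
    unfolding convex_def Pint_def
  proof (intro ballI allI impI, simp only: mem_Collect_eq, intro allI impI)
    fix x y :: "real^('s\<times>'v)" and u v :: real and xi j k
    assume x: "\<forall>xi j k. j < k \<longrightarrow> k \<le> length R \<longrightarrow> of_int (r xi j k) \<le> (\<Sum>i\<in>{j..<k}. x$(xi,R!i))"
      and y: "\<forall>xi j k. j < k \<longrightarrow> k \<le> length R \<longrightarrow> of_int (r xi j k) \<le> (\<Sum>i\<in>{j..<k}. y$(xi,R!i))"
      and u: "0 \<le> u" and v: "0 \<le> v" and uv: "u + v = 1" and jk: "j < (k::nat)" "k \<le> length R"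
    have a: "u * of_int (r xi j k) \<le> u * (\<Sum>i\<in>{j..<k}. x$(xi,R!i))"
      using x jk u by (simp add: mult_left_mono)
    have b: "v * of_int (r xi j k) \<le> v * (\<Sum>i\<in>{j..<k}. y$(xi,R!i))"
      using y jk v by (simp add: mult_left_mono)
    have "(\<Sum>i\<in>{j..<k}. (u *\<^sub>R x + v *\<^sub>R y)$(xi,R!i)) =
          u * (\<Sum>i\<in>{j..<k}. x$(xi,R!i)) + v * (\<Sum>i\<in>{j..<k}. y$(xi,R!i))"
      by (simp add: sum.distrib sum_distrib_left)
    moreover have "u * of_int (r xi j k) + v * of_int (r xi j k) = (of_int (r xi j k) :: real)"
      using uv by (metis distrib_right mult_1)
    ultimately show "of_int (r xi j k) \<le> (\<Sum>i\<in>{j..<k}. (u *\<^sub>R x + v *\<^sub>R y)$(xi,R!i))"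
      using a b by linarith
  qed
  have hP: "convex hull (PiR C d R) \<subseteq> Pint"
    using PiP cP by (rule hull_minimal)
  have satT: "satK K (Tmap R y)" if yP: "y \<in> Pint" and yB: "y \<in> boxN b" for y
  proof -
    have yb: "0 \<le> y$(xi,v)" "y$(xi,v) \<le> of_int (b v)" for xi v using yB unfolding boxN_def by auto
    have ovn: "oval (Tmap R y) (node R xi m) = (\<Sum>i<m. y$(xi, R!i))" if "m \<le> length R" for xi m
      using oval_Tmap[OF dist that] .
    have ovs: "oval (Tmap R y) (Some (xi,v)) = y$(xi,v)" if "v \<notin> set R" for xi v
      using that by (simp add: oval_def Tmap_def)
    have k1: "of_int c \<le> oval (Tmap R y) a - oval (Tmap R y) a'" if "(a, a', c) \<in> K1" for a a' c
    proof -
      from that obtain xi j k where "a = node R xi k" "a' = node R xi j" "c = r xi j k" "j < k" "k \<le> length R"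
        unfolding K1_def by blast
      thus ?thesis using yP unfolding Pint_def by (simp add: ovn lt_split)
    qed
    have k2: "of_int c \<le> oval (Tmap R y) a - oval (Tmap R y) a'" if "(a, a', c) \<in> K2" for a a' c
    proof -
      from that obtain xi m where "a = node R xi (Suc m)" "a' = node R xi m" "c = 0" "m < length R"
        unfolding K2_def by blast
      thus ?thesis using yb by (simp add: ovn)
    qed
    have k3: "of_int c \<le> oval (Tmap R y) a - oval (Tmap R y) a'" if "(a, a', c) \<in> K3" for a a' c
    proof -
      from that obtain xi m where "a = node R xi m" "a' = node R xi (Suc m)" "c = - b (R!m)" "m < length R"
        unfolding K3_def by blast
      thus ?thesis using yb by (simp add: ovn)
    qed
    have k4: "of_int c \<le> oval (Tmap R y) a - oval (Tmap R y) a'" if "(a, a', c) \<in> K4" for a a' c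
    proof -
      from that obtain xi v where "a = Some (xi,v)" "a' = None" "c = 0" "v \<notin> set R"
        unfolding K4_def by blast
      moreover have "Tmap R y $ (xi,v) = y $ (xi,v)" using ovs[OF \<open>v \<notin> set R\<close>, of xi] by (simp add: oval_def)
      ultimately show ?thesis using yb[of xi v] by (simp add: oval_def)
    qed
    have k5: "of_int c \<le> oval (Tmap R y) a - oval (Tmap R y) a'" if "(a, a', c) \<in> K5" for a a' c
    proof -
      from that obtain xi v where "a = None" "a' = Some (xi,v)" "c = - b v" "v \<notin> set R"
        unfolding K5_def by blast
      moreover have "Tmap R y $ (xi,v) = y $ (xi,v)" using ovs[OF \<open>v \<notin> set R\<close>, of xi] by (simp add: oval_def)
      ultimately show ?thesis using yb[of xi v] by (simp add: oval_def)
    qed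
    show ?thesis unfolding satK_def
    proof (intro ballI, clarify)
      fix a a' c assume "(a, a', c) \<in> K"
      thus "of_int c \<le> oval (Tmap R y) a - oval (Tmap R y) a'" unfolding K_def using k1 k2 k3 k4 k5 by blast
    qed
  qed
  have qback: "Tinv R q \<in> PiR C d R \<inter> boxN b" if qK: "satK K q" and qI: "\<forall>i. q$i \<in> \<int>" for q
  proof -
    have sat: "of_int c \<le> oval q a - oval q a'" if "(a, a', c) \<in> K" for a a' c
      using qK that unfolding satK_def by blast
    have ovI: "oval q a \<in> \<int>" for a
    proof (cases a)
      case None thus ?thesis by (simp add: oval_def)
    next
      case (Some u) thus ?thesis using qI[rule_format, of u] by (simp add: oval_def)
    qed
    have zI: "Tinv R q $ i \<in> \<int>" for i unfolding Tinv_def using ovI qI[rule_format, of i] by simp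
    have zB: "0 \<le> Tinv R q $ (xi,v) \<and> Tinv R q $ (xi,v) \<le> of_int (b v)" for xi v
    proof (cases "v \<in> set R")
      case True
      then obtain m where m: "m < length R" "v = R!m" by (auto simp: in_set_conv_nth)
      have "(node R xi (Suc m), node R xi m, 0) \<in> K2" using m unfolding K2_def by blast
      hence "(node R xi (Suc m), node R xi m, 0) \<in> K" unfolding K_def by simp
      moreover have "(node R xi m, node R xi (Suc m), - b (R!m)) \<in> K3" using m unfolding K3_def by blast
      hence "(node R xi m, node R xi (Suc m), - b (R!m)) \<in> K" unfolding K_def by simp
      ultimately have "of_int 0 \<le> oval q (node R xi (Suc m)) - oval q (node R xi m)"
        "of_int (- b (R!m)) \<le> oval q (node R xi m) - oval q (node R xi (Suc m))" using sat by blast+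
      thus ?thesis using m Tinv_nth[OF dist m(1), of q xi] by simp
    next
      case False
      have "(Some (xi,v), None, 0) \<in> K4" using False unfolding K4_def by blast
      hence "(Some (xi,v), None, 0) \<in> K" unfolding K_def by simp
      moreover have "(None, Some (xi,v), - b v) \<in> K5" using False unfolding K5_def by blast
      hence "(None, Some (xi,v), - b v) \<in> K" unfolding K_def by simp
      moreover have "Tinv R q $ (xi,v) = q $ (xi,v)" using False by (simp add: Tinv_def)
      ultimately have "of_int 0 \<le> oval q (Some (xi,v)) - oval q None"
        "of_int (- b v) \<le> oval q None - oval q (Some (xi,v))" using sat by blast+
      thus ?thesis using \<open>Tinv R q $ (xi,v) = q $ (xi,v)\<close> by (simp add: oval_def)
    qed
    have "Tinv R q \<in> PiR C d R" unfolding PiR_def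
    proof (intro CollectI allI)
      fix xi
      show "(\<lambda>v. Tinv R q $ (xi, v)) \<in> Yset C (d xi) R"
        unfolding Ych
      proof (intro conjI allI impI)
        fix v show "Tinv R q $ (xi, v) \<in> \<int>" "0 \<le> Tinv R q $ (xi, v)" using zI zB by auto
      next
        fix j k assume jk: "j < (k::nat)" "k \<le> length R"
        have "(node R xi k, node R xi j, r xi j k) \<in> K1" using jk unfolding K1_def by blast
        hence "(node R xi k, node R xi j, r xi j k) \<in> K" unfolding K_def by simp
        hence "of_int (r xi j k) \<le> (\<Sum>i\<in>{j..<k}. Tinv R q $ (xi, R!i))"
          using sat Tinv_sum[OF dist _ jk(2), of j q xi] jk by simp
        thus "(\<Sum>i\<in>{j..<k}. d xi (R!i)) - C \<le> C * (\<Sum>i\<in>{j..<k}. Tinv R q $ (xi, R!i))"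
          unfolding r_def by (rule ceil1[OF Cp])
      qed
    qed
    moreover have "Tinv R q \<in> boxN b" unfolding boxN_def using zB by simp
    ultimately show ?thesis by simp
  qed
  show ?thesis
  proof
    show "convex hull (PiR C d R \<inter> boxN b) \<subseteq> convex hull (PiR C d R) \<inter> boxN b"
    proof (rule Int_greatest)
      show "convex hull (PiR C d R \<inter> boxN b) \<subseteq> convex hull (PiR C d R)"
        by (rule hull_mono) simp
      show "convex hull (PiR C d R \<inter> boxN b) \<subseteq> boxN b"
        by (rule hull_minimal) (simp_all add: convex_boxN)
    qed
  next
    show "convex hull (PiR C d R) \<inter> boxN b \<subseteq> convex hull (PiR C d R \<inter> boxN b)"
    proof
      fix y assume y: "y \<in> convex hull (PiR C d R) \<inter> boxN b"
      hence "y \<in> Pint" using hP by blast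
      hence "satK K (Tmap R y)" using satT y by blast
      hence "Tmap R y \<in> convex hull {q. satK K q \<and> (\<forall>i. q$i \<in> \<int>)}" by (rule rounding)
      hence "Tinv R (Tmap R y) \<in> Tinv R ` (convex hull {q. satK K q \<and> (\<forall>i. q$i \<in> \<int>)})" by blast
      also have "\<dots> = convex hull (Tinv R ` {q. satK K q \<and> (\<forall>i. q$i \<in> \<int>)})"
        by (rule convex_hull_linear_image[OF linear_Tinv])
      also have "\<dots> \<subseteq> convex hull (PiR C d R \<inter> boxN b)"
        by (rule hull_mono) (use qback in blast)
      finally have "Tinv R (Tmap R y) \<in> convex hull (PiR C d R \<inter> boxN b)" .
      moreover have "Tinv R (Tmap R y) = y" by (rule Tinv_Tmap[OF dist])
      ultimately show "y \<in> convex hull (PiR C d R \<inter> boxN b)" by simp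
    qed
  qed
qed


end
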